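(* Let $n\ge1$, $T\ge1$, $\beta\in(0,1)$, and let $\mathcal{Q}$ be the set of all matrices $D(A)$ with $A\in\mathcal{F}$, and $E=D(B)$. Then: (i) for every $D\in\mathcal{Q}$ and every $\mathbf{z}\in\mathbb{R}^{Tn}$, $\|D\mathbf{z}\|_T\le\|\mathbf{z}\|_T$; (ii) the subspace $W_T:=\{\mathbf{z}=(\mathbf{z}_1^\top,\dots,\mathbf{z}_T^\top)^\top\in\mathbb{R}^{Tn}:\ \mathbf{e}^\top\mathbf{z}_t=0 \text{ for } t=1,\dots,T\}$ satisfies $DW_T\subseteq W_T$ for all $D\in\mathcal{Q}$; (iii) for every non-zero $\mathbf{z}\in W_T$, $\|E\mathbf{z}\|_T<\|\mathbf{z}\|_T$.
   Context: $\mathbf{e}\in\mathbb{R}^n$ is the all-ones vector. For $b\in\{\beta,1\}^n$ the AIMD matrix is $A_b=\operatorname{diag}(b)+\frac1n\mathbf{e}(\mathbf{e}-b)^\top\in\mathbb{R}^{n\times n}$; $\mathcal{F}=\{A_b: b\in\{\beta,1\}^n\}$, and $B:=A_{\beta\mathbf{e}}=\beta I+\frac{1-\beta}{n}\mathbf{e}\mathbf{e}^\top$. For $A\in\mathcal{F}$, $D(A)\in\mathbb{R}^{Tn\times Tn}$ is the $T\times T$ block matrix with $n\times n$ blocks defined by: block row 1 is $(A,0,\dots,0)$; block row 2 (if $T\ge2$) is $(\tfrac12(A+I),0,\dots,0)$; for $3\le \ell\le T$, block row $\ell$ has $\tfrac1\ell A$ in block column 1, $\tfrac{\ell-1}{\ell}I$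 in block column $\ell-1$, and zero blocks elsewhere. For $\mathbf{z}=(\mathbf{z}_1^\top,\dots,\mathbf{z}_T^\top)^\top$ with $\mathbf{z}_\ell\in\mathbb{R}^n$, $\|\mathbf{z}\|_T:=\max_{\ell=1,\dots,T}\|\mathbf{z}_\ell\|_1$, where $\|\cdot\|_1$ is the usual $\ell^1$ norm on $\mathbb{R}^n$. *)

theory Defs
  imports "Jordan_Normal_Form.Matrix"
begin

text \<open>AIMD matrix A_b = diag(b) + (1/n) e (e - b)^T, b given as a function on indices 0..n-1.\<close>
definition AIMD :: "nat \<Rightarrow> (nat \<Rightarrow> real) \<Rightarrow> real mat" where
  "AIMD n b = mat n n (\<lambda>(i,j). (if i = j then b i else 0) + (1 - b j) / real n)"

definition AIMD_family :: "nat \<Rightarrow> real \<Rightarrow> real mat set" where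
  "AIMD_family n \<beta> = {AIMD n b | b. \<forall>i<n. b i \<in> {\<beta>, 1}}"

definition Bmat :: "nat \<Rightarrow> real \<Rightarrow> real mat" where
  "Bmat n \<beta> = AIMD n (\<lambda>_. \<beta>)"

text \<open>The T x T block matrix D(A) with n x n blocks. Block rows/columns are indexed
  0-based here: block row p corresponds to the paper's block row p+1.\<close>
definition Dmat :: "nat \<Rightarrow> nat \<Rightarrow> real mat \<Rightarrow> real mat" where
  "Dmat n T A = mat (T*n) (T*n) (\<lambda>(k,l).
     let p = k div n; q = l div n; i = k mod n; j = l mod n;
         I = (if i = j then 1 else 0 :: real) in
     if p = 0 then (if q = 0 then A $$ (i,j) else 0)
     else if p = 1 then (if q = 0 then (A $$ (i,j) + I) / 2 else 0)
     else (if q = 0 then A $$ (i,j) / real (p+1)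
           else if q = p - 1 then real p / real (p+1) * I else 0))"

definition Qset :: "nat \<Rightarrow> nat \<Rightarrow> real \<Rightarrow> real mat set" where
  "Qset n T \<beta> = Dmat n T ` AIMD_family n \<beta>"

definition Emat :: "nat \<Rightarrow> nat \<Rightarrow> real \<Rightarrow> real mat" where
  "Emat n T \<beta> = Dmat n T (Bmat n \<beta>)"

definition blk :: "nat \<Rightarrow> real vec \<Rightarrow> nat \<Rightarrow> real vec" where
  "blk n z t = vec n (\<lambda>i. z $ (t*n + i))"

definition norm1 :: "real vec \<Rightarrow> real" where
  "norm1 v = (\<Sum>i<dim_vec v. \<bar>v $ i\<bar>)"

definition normT :: "nat \<Rightarrow> nat \<Rightarrow> real vec \<Rightarrow> real" where
  "normT n T z = Max ((\<lambda>t. norm1 (blk n z t)) ` {..<T})"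

definition WT :: "nat \<Rightarrow> nat \<Rightarrow> real vec set" where
  "WT n T = {z \<in> carrier_vec (T*n). \<forall>t<T. (\<Sum>i<n. (blk n z t) $ i) = 0}"

end

theory Submission
  imports Defs
begin

lemma sum_blocks: "(\<Sum>l<(T::nat)*(n::nat). f l) = (\<Sum>q<T. \<Sum>j<n. (f (q*n+j)::real))"
proof (induction T)
  case 0 then show ?case by simp
next
  case (Suc T)
  have "{..<Suc T * n} = {..<T*n} \<union> {T*n..<T*n+n}" by auto
  then have "(\<Sum>l<Suc T*n. f l) = (\<Sum>l<T*n. f l) + (\<Sum>l\<in>{T*n..<T*n+n}. f l)"
    by (simp add: sum.union_disjoint ivl_disj_int)
  also have "(\<Sum>l\<in>{T*n..<T*n+n}. f l) = (\<Sum>j<n. f (T*n+j))"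
    using sum.shift_bounds_nat_ivl[of f 0 "T*n" n] by (simp add: lessThan_atLeast0 add.commute)
  finally show ?case using Suc by simp
qed

lemma Dmat_entry:
  assumes n: "n \<ge> 1" and z: "z \<in> carrier_vec (T*n)" and p: "p < T" and i: "i < n"
  shows "(Dmat n T A *\<^sub>v z) $ (p*n+i) =
    (let S = (\<Sum>j<n. A $$ (i,j) * z $ j) in
     if p = 0 then S else if p = 1 then (S + z $ i)/2
     else S / real (p+1) + real p / real (p+1) * z $ ((p-1)*n+i))"
proof -
  have k: "p*n+i < T*n" using p i
  proof -
    have "p*n+i < p*n+n" using i by simp
    also have "\<dots> = Suc p * n" by simp
    also have "\<dots> \<le> T*n" using p by (intro mult_le_mono1) simp
    finally show ?thesis .
  qed
  have dz: "dim_vec z = T*n" using z by simp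
  have divk: "(p*n+i) div n = p" "(p*n+i) mod n = i" using i by auto
  have "(Dmat n T A *\<^sub>v z) $ (p*n+i) = (\<Sum>l<T*n. Dmat n T A $$ (p*n+i, l) * z $ l)"
    using k dz by (simp add: Dmat_def scalar_prod_def lessThan_atLeast0)
  also have "\<dots> = (\<Sum>q<T. \<Sum>j<n. Dmat n T A $$ (p*n+i, q*n+j) * z $ (q*n+j))"
    by (rule sum_blocks)
  also have "\<dots> = (\<Sum>q<T. \<Sum>j<n. (if p=0 then (if q=0 then A$$(i,j) else 0) else if p=1 then (if q=0 then (A$$(i,j) + (if i=j then 1 else 0))/2 else 0) else (if q=0 then A$$(i,j)/real(p+1) else if q=p-1 then real p/real(p+1) * (if i=j then 1 else 0) else 0)) * z $ (q*n+j))"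
  proof (intro sum.cong refl)
    fix q j assume q: "q \<in> {..<T}" and j: "j \<in> {..<n}"
    have k2: "q*n+j < T*n"
    proof -
      have "q*n+j < q*n+n" using j by simp
      also have "\<dots> = Suc q * n" by simp
      also have "\<dots> \<le> T*n" using q by (intro mult_le_mono1) simp
      finally show ?thesis .
    qed
    have "(q*n+j) div n = q" "(q*n+j) mod n = j" using j by auto
    then show "Dmat n T A $$ (p*n+i, q*n+j) * z $ (q*n+j) = (if p=0 then (if q=0 then A$$(i,j) else 0) else if p=1 then (if q=0 then (A$$(i,j) + (if i=j then 1 else 0))/2 else 0) else (if q=0 then A$$(i,j)/real(p+1) else if q=p-1 then real p/real(p+1) * (if i=j then 1 else 0) else 0)) * z $ (q*n+j)"
      using k k2 divk by (simp add: Dmat_def Let_def)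
  qed
  also have "\<dots> = (let S = (\<Sum>j<n. A $$ (i,j) * z $ j) in
     if p = 0 then S else if p = 1 then (S + z $ i)/2
     else S / real (p+1) + real p / real (p+1) * z $ ((p-1)*n+i))" (is "?L = ?R")
  proof -
    have T0: "0 < T" using p by simp
    consider "p = 0" | "p = 1" | "p \<ge> 2" by linarith
    then show ?thesis
    proof cases
      case 1
      then have "?L = (\<Sum>q<T. if q = 0 then (\<Sum>j<n. A$$(i,j) * z $ (q*n+j)) else 0)"
        by (intro sum.cong refl) auto
      also have "\<dots> = (\<Sum>j<n. A$$(i,j) * z $ j)" using T0 by (simp add: sum.delta)
      finally show ?thesis using 1 by (simp add: Let_def)
    next
      case 2
      then have "?L = (\<Sum>q<T. if q = 0 then (\<Sum>j<n. (A$$(i,j) + (if i=j then 1 else 0))/2 * z $ (q*n+j)) else 0)"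
        by (intro sum.cong refl) auto
      also have "\<dots> = (\<Sum>j<n. (A$$(i,j) + (if i=j then 1 else 0))/2 * z $ j)" using T0 by (simp add: sum.delta)
      also have "\<dots> = ((\<Sum>j<n. A$$(i,j) * z $ j) + (\<Sum>j<n. (if i=j then 1 else 0) * z $ j))/2"
        by (simp add: sum.distrib sum_divide_distrib algebra_simps add_divide_distrib)
      also have "(\<Sum>j<n. (if i=j then 1 else 0) * z $ j) = (\<Sum>j<n. if i = j then z $ j else 0)"
        by (intro sum.cong) auto
      also have "\<dots> = z $ i" using i by simp
      finally show ?thesis using 2 by (simp add: Let_def)
    next
      case 3
      have pT: "p - 1 < T" "p - 1 \<noteq> 0" using p 3 by auto
      have "?L = (\<Sum>q<T. (if q = 0 then (\<Sum>j<n. A$$(i,j)/real(p+1) * z $ (q*n+j)) else 0)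
            + (if q = p - 1 then (\<Sum>j<n. real p/real(p+1) * (if i=j then 1 else 0) * z $ (q*n+j)) else 0))"
        using 3 by (intro sum.cong refl) (auto simp: sum.distrib)
      also have "\<dots> = (\<Sum>j<n. A$$(i,j)/real(p+1) * z $ j) + (\<Sum>j<n. real p/real(p+1) * (if i=j then 1 else 0) * z $ ((p-1)*n+j))"
        using T0 pT by (simp add: sum.distrib sum.delta)
      also have "(\<Sum>j<n. A$$(i,j)/real(p+1) * z $ j) = (\<Sum>j<n. A$$(i,j) * z $ j) / real (p+1)"
        by (simp add: sum_divide_distrib)
      also have "(\<Sum>j<n. real p/real(p+1) * (if i=j then 1 else 0) * z $ ((p-1)*n+j)) = (\<Sum>j<n. if i = j then real p/real(p+1) * z $ ((p-1)*n+j) else 0)"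
        by (intro sum.cong) auto
      also have "\<dots> = real p/real(p+1) * z $ ((p-1)*n+i)" using i by simp
      finally show ?thesis using 3 by (simp add: Let_def)
    qed
  qed
  finally show ?thesis .
qed

definition colstoch :: "nat \<Rightarrow> real mat \<Rightarrow> bool" where
  "colstoch n A \<longleftrightarrow> (\<forall>i<n. \<forall>j<n. A$$(i,j) \<ge> 0) \<and> (\<forall>j<n. (\<Sum>i<n. A$$(i,j)) = 1)"

lemma AIMD_entry: "i < n \<Longrightarrow> j < n \<Longrightarrow> AIMD n b $$ (i,j) = (if i=j then b i else 0) + (1 - b j)/real n"
  by (simp add: AIMD_def)

lemma AIMD_colstoch:
  assumes n: "n \<ge> 1" and b: "\<forall>i<n. b i \<in> {\<beta>, 1}" and be: "0 < \<beta>" "\<beta> < 1"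
  shows "colstoch n (AIMD n b)"
  unfolding colstoch_def
proof (intro conjI allI impI)
  fix i j assume i: "i < n" and j: "j < n"
  have "0 \<le> b i" "b j \<le> 1" using b i j be by auto
  moreover have "0 \<le> (1 - b j)/real n" using \<open>b j \<le> 1\<close> by simp
  moreover have "0 \<le> (if i=j then b i else 0)" using \<open>0 \<le> b i\<close> by auto
  moreover have "AIMD n b $$ (i,j) = (if i=j then b i else 0) + (1-b j)/real n" by (rule AIMD_entry[OF i j])
  ultimately show "0 \<le> AIMD n b $$ (i, j)" by linarith
next
  fix j assume j: "j < n"
  have "(\<Sum>i<n. AIMD n b $$ (i, j)) = (\<Sum>i<n. (if i=j then b i else 0) + (1 - b j)/real n)"
    using j by (intro sum.cong) (auto simp: AIMD_entry)
  also have "\<dots> = b j + real n * ((1 - b j)/real n)" using j by (simp add: sum.distrib)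
  also have "\<dots> = 1" using n by simp
  finally show "(\<Sum>i<n. AIMD n b $$ (i, j)) = 1" .
qed

lemma colstoch_abs:
  assumes "colstoch n A"
  shows "(\<Sum>i<n. \<bar>\<Sum>j<n. A$$(i,j) * x j\<bar>) \<le> (\<Sum>j<n. \<bar>x j\<bar>)"
proof -
  have "(\<Sum>i<n. \<bar>\<Sum>j<n. A$$(i,j) * x j\<bar>) \<le> (\<Sum>i<n. \<Sum>j<n. A$$(i,j) * \<bar>x j\<bar>)"
  proof (intro sum_mono)
    fix i assume i: "i \<in> {..<n}"
    have "\<bar>\<Sum>j<n. A$$(i,j) * x j\<bar> \<le> (\<Sum>j<n. \<bar>A$$(i,j) * x j\<bar>)" by (rule sum_abs)
    also have "\<dots> = (\<Sum>j<n. A$$(i,j) * \<bar>x j\<bar>)"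
      using assms i by (intro sum.cong) (auto simp: colstoch_def abs_mult)
    finally show "\<bar>\<Sum>j<n. A$$(i,j) * x j\<bar> \<le> (\<Sum>j<n. A$$(i,j) * \<bar>x j\<bar>)" .
  qed
  also have "\<dots> = (\<Sum>j<n. (\<Sum>i<n. A$$(i,j)) * \<bar>x j\<bar>)"
    by (subst sum.swap) (simp add: sum_distrib_right)
  also have "\<dots> = (\<Sum>j<n. \<bar>x j\<bar>)" using assms by (intro sum.cong) (auto simp: colstoch_def)
  finally show ?thesis .
qed

lemma colstoch_sum:
  assumes "colstoch n A"
  shows "(\<Sum>i<n. \<Sum>j<n. A$$(i,j) * x j) = (\<Sum>j<n. x j)"
proof -
  have "(\<Sum>i<n. \<Sum>j<n. A$$(i,j) * x j) = (\<Sum>j<n. (\<Sum>i<n. A$$(i,j)) * x j)"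
    by (subst sum.swap) (simp add: sum_distrib_right)
  also have "\<dots> = (\<Sum>j<n. x j)" using assms by (intro sum.cong) (auto simp: colstoch_def)
  finally show ?thesis .
qed

lemma norm1_blk: "norm1 (blk n z t) = (\<Sum>i<n. \<bar>z $ (t*n+i)\<bar>)"
  by (simp add: norm1_def blk_def)

lemma blk_bound:
  assumes n: "n \<ge> 1" and z: "z \<in> carrier_vec (T*n)" and p: "p < T"
    and g: "(\<Sum>i<n. \<bar>\<Sum>j<n. A$$(i,j) * z$j\<bar>) \<le> \<gamma> * (\<Sum>i<n. \<bar>z$i\<bar>)"
  shows "norm1 (blk n (Dmat n T A *\<^sub>v z) p) \<le>
     (if p = 0 then \<gamma> * (\<Sum>i<n. \<bar>z$i\<bar>) else if p = 1 then (\<gamma>+1)/2 * (\<Sum>i<n. \<bar>z$i\<bar>)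
      else (\<gamma> * (\<Sum>i<n. \<bar>z$i\<bar>) + real p * (\<Sum>i<n. \<bar>z$((p-1)*n+i)\<bar>)) / real (p+1))"
proof -
  define S where "S i = (\<Sum>j<n. A $$ (i,j) * z $ j)" for i
  define N0 where "N0 = (\<Sum>i<n. \<bar>z$i\<bar>)"
  have g': "(\<Sum>i<n. \<bar>S i\<bar>) \<le> \<gamma> * N0" using g by (simp add: S_def N0_def)
  have e: "norm1 (blk n (Dmat n T A *\<^sub>v z) p) = (\<Sum>i<n. \<bar>if p = 0 then S i else if p = 1 then (S i + z $ i)/2
     else S i / real (p+1) + real p / real (p+1) * z $ ((p-1)*n+i)\<bar>)"
    unfolding norm1_blk using Dmat_entry[OF n z p] by (intro sum.cong) (auto simp: S_def Let_def)
  consider "p = 0" | "p = 1" | "p \<ge> 2" by linarith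
  then show ?thesis
  proof cases
    case 1 then show ?thesis using e g' by (simp add: N0_def)
  next
    case 2
    have "(\<Sum>i<n. \<bar>(S i + z $ i)/2\<bar>) \<le> (\<Sum>i<n. \<bar>S i\<bar>/2 + \<bar>z $ i\<bar>/2)"
      by (intro sum_mono) (simp add: abs_triangle_ineq add_divide_distrib[symmetric])
    also have "\<dots> = (\<Sum>i<n. \<bar>S i\<bar>)/2 + N0/2" by (simp add: sum.distrib sum_divide_distrib N0_def)
    also have "\<dots> \<le> (\<gamma> * N0)/2 + N0/2" using g' by linarith
    also have "\<dots> = (\<gamma>+1)/2 * N0" by (simp add: distrib_right add_divide_distrib)
    finally show ?thesis using e 2 by (simp add: N0_def)
  next
    case 3
    let ?N = "(\<Sum>i<n. \<bar>z$((p-1)*n+i)\<bar>)"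
    have tri: "\<bar>a/real(p+1) + real p/real(p+1)*x\<bar> \<le> \<bar>a\<bar>/real(p+1) + real p/real(p+1)*\<bar>x\<bar>" for a x :: real
    proof -
      have pos: "real p / real (p+1) \<ge> 0" by simp
      have "\<bar>a/real(p+1) + real p/real(p+1)*x\<bar> \<le> \<bar>a/real(p+1)\<bar> + \<bar>real p/real(p+1)*x\<bar>" by (rule abs_triangle_ineq)
      also have "\<bar>a/real(p+1)\<bar> = \<bar>a\<bar>/real(p+1)" by (simp add: abs_divide)
      also have "\<bar>real p/real(p+1)*x\<bar> = real p/real(p+1)*\<bar>x\<bar>" using pos by (simp add: abs_mult)
      finally show ?thesis .
    qed
    have "(\<Sum>i<n. \<bar>S i / real (p+1) + real p / real (p+1) * z $ ((p-1)*n+i)\<bar>) \<le>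
          (\<Sum>i<n. \<bar>S i\<bar> / real (p+1) + real p / real (p+1) * \<bar>z $ ((p-1)*n+i)\<bar>)"
      by (intro sum_mono tri)
    also have "\<dots> = (\<Sum>i<n. \<bar>S i\<bar>) / real (p+1) + real p / real (p+1) * ?N"
      by (simp only: sum.distrib sum_divide_distrib sum_distrib_left)
    also have "\<dots> = ((\<Sum>i<n. \<bar>S i\<bar>) + real p * ?N) / real (p+1)"
      by (simp only: add_divide_distrib times_divide_eq_left)
    also have "\<dots> \<le> (\<gamma> * N0 + real p * ?N) / real (p+1)"
      using g' by (intro divide_right_mono) auto
    finally show ?thesis using e 3 by (simp add: N0_def)
  qed
qed


lemma blk_le_normT:
  assumes "t < T" shows "(\<Sum>i<n. \<bar>z$(t*n+i)\<bar>) \<le> normT n T z"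
  unfolding normT_def norm1_blk[symmetric] using assms by (intro Max_ge) auto

lemma normT_le:
  assumes "T \<ge> 1" "\<And>t. t < T \<Longrightarrow> norm1 (blk n w t) \<le> M"
  shows "normT n T w \<le> M"
proof -
  have "0 \<in> {..<T}" using assms(1) by simp
  then have "{..<T} \<noteq> {}" by blast
  then show ?thesis unfolding normT_def using assms(2) by (subst Max_le_iff) auto
qed

lemma normT_less:
  assumes "T \<ge> 1" "\<And>t. t < T \<Longrightarrow> norm1 (blk n w t) < M"
  shows "normT n T w < M"
proof -
  have "0 \<in> {..<T}" using assms(1) by simp
  then have "{..<T} \<noteq> {}" by blast
  then show ?thesis unfolding normT_def using assms(2) by (subst Max_less_iff) auto
qed

lemma dim_Dmat: "Dmat n T A *\<^sub>v z \<in> carrier_vec (T*n)"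
  unfolding carrier_vec_def mem_Collect_eq dim_mult_mat_vec Dmat_def dim_row_mat by (rule refl)

theorem lemma1:
  fixes n T :: nat and \<beta> :: real
  assumes "n \<ge> 1" and "T \<ge> 1" and "0 < \<beta>" and "\<beta> < 1"
  shows "(\<forall>D \<in> Qset n T \<beta>. \<forall>z \<in> carrier_vec (T*n). normT n T (D *\<^sub>v z) \<le> normT n T z)
       \<and> (\<forall>D \<in> Qset n T \<beta>. \<forall>z \<in> WT n T. D *\<^sub>v z \<in> WT n T)
       \<and> (\<forall>z \<in> WT n T. z \<noteq> 0\<^sub>v (T*n) \<longrightarrow> normT n T (Emat n T \<beta> *\<^sub>v z) < normT n T z)"
proof (intro conjI ballI impI)
  fix D and z :: "real vec" assume D: "D \<in> Qset n T \<beta>" and z: "z \<in> carrier_vec (T*n)"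
  obtain b where b: "\<forall>i<n. b i \<in> {\<beta>, 1}" and Dd: "D = Dmat n T (AIMD n b)"
    using D by (auto simp: Qset_def AIMD_family_def)
  have cs: "colstoch n (AIMD n b)" using AIMD_colstoch[OF assms(1) b assms(3,4)] .
  let ?M = "normT n T z"
  have N0: "(\<Sum>i<n. \<bar>z$i\<bar>) \<le> ?M" using blk_le_normT[where t=0 and T=T and n=n and z=z] assms(2) by simp
  show "normT n T (D *\<^sub>v z) \<le> ?M" unfolding Dd
  proof (rule normT_le[OF assms(2)])
    fix t assume t: "t < T"
    have bb: "norm1 (blk n (Dmat n T (AIMD n b) *\<^sub>v z) t) \<le>
     (if t = 0 then 1 * (\<Sum>i<n. \<bar>z$i\<bar>) else if t = 1 then (1+1)/2 * (\<Sum>i<n. \<bar>z$i\<bar>)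
      else (1 * (\<Sum>i<n. \<bar>z$i\<bar>) + real t * (\<Sum>i<n. \<bar>z$((t-1)*n+i)\<bar>)) / real (t+1))"
      by (rule blk_bound[OF assms(1) z t]) (simp add: colstoch_abs[OF cs])
    have Nt: "(\<Sum>i<n. \<bar>z$((t-1)*n+i)\<bar>) \<le> ?M" using t by (intro blk_le_normT) simp
    have "(1 * (\<Sum>i<n. \<bar>z$i\<bar>) + real t * (\<Sum>i<n. \<bar>z$((t-1)*n+i)\<bar>)) / real (t+1) \<le> ?M"
    proof -
      have "1 * (\<Sum>i<n. \<bar>z$i\<bar>) + real t * (\<Sum>i<n. \<bar>z$((t-1)*n+i)\<bar>) \<le> ?M + real t * ?M"
        using N0 Nt by (intro add_mono mult_left_mono) auto
      then show ?thesis by (simp add: field_simps)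
    qed
    then show "norm1 (blk n (Dmat n T (AIMD n b) *\<^sub>v z) t) \<le> ?M"
      using bb N0 by (auto split: if_splits)
  qed
next
  fix D z assume D: "D \<in> Qset n T \<beta>" and z: "z \<in> WT n T"
  obtain b where b: "\<forall>i<n. b i \<in> {\<beta>, 1}" and Dd: "D = Dmat n T (AIMD n b)"
    using D by (auto simp: Qset_def AIMD_family_def)
  have cs: "colstoch n (AIMD n b)" using AIMD_colstoch[OF assms(1) b assms(3,4)] .
  have zc: "z \<in> carrier_vec (T*n)" and zs: "\<And>t. t < T \<Longrightarrow> (\<Sum>i<n. z $ (t*n+i)) = 0"
    using z by (auto simp: WT_def blk_def)
  have z0: "(\<Sum>i<n. z $ i) = 0" using zs[of 0] assms(2) by simp
  show "D *\<^sub>v z \<in> WT n T" unfolding WT_def Dd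
  proof (intro CollectI conjI allI impI dim_Dmat)
    fix t assume t: "t < T"
    define S where "S i = (\<Sum>j<n. AIMD n b $$ (i,j) * z $ j)" for i
    have S0: "(\<Sum>i<n. S i) = 0" unfolding S_def using colstoch_sum[OF cs, of "\<lambda>j. z $ j"] z0 by simp
    have "(\<Sum>i<n. blk n (Dmat n T (AIMD n b) *\<^sub>v z) t $ i) = (\<Sum>i<n. if t = 0 then S i else if t = 1 then (S i + z $ i)/2
     else S i / real (t+1) + real t / real (t+1) * z $ ((t-1)*n+i))"
      using Dmat_entry[OF assms(1) zc t] by (intro sum.cong) (auto simp: S_def Let_def blk_def)
    also have "\<dots> = 0"
    proof -
      consider "t = 0" | "t = 1" | "t \<ge> 2" by linarith
      then show ?thesis
      proof cases
        case 1 then show ?thesis using S0 by simp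
      next
        case 2 then show ?thesis using S0 z0 by (simp add: sum.distrib sum_divide_distrib[symmetric])
      next
        case 3
        have "(\<Sum>i<n. z $ ((t-1)*n+i)) = 0" using t by (intro zs) simp
        then show ?thesis using S0 3
          by (simp add: sum.distrib sum_divide_distrib[symmetric] sum_distrib_left[symmetric])
      qed
    qed
    finally show "(\<Sum>i<n. blk n (Dmat n T (AIMD n b) *\<^sub>v z) t $ i) = 0" .
  qed
next
  fix z assume z: "z \<in> WT n T" and nz: "z \<noteq> 0\<^sub>v (T*n)"
  have zc: "z \<in> carrier_vec (T*n)" and zs: "\<And>t. t < T \<Longrightarrow> (\<Sum>i<n. z $ (t*n+i)) = 0"
    using z by (auto simp: WT_def blk_def)
  have z0: "(\<Sum>i<n. z $ i) = 0" using zs[of 0] assms(2) by simp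
  let ?M = "normT n T z"
  obtain k where k: "k < T*n" "z $ k \<noteq> 0" using nz zc by (auto simp: vec_eq_iff)
  have Mpos: "?M > 0"
  proof -
    have kd: "k = (k div n)*n + k mod n" by simp
    have kT: "k div n < T" using k(1) by (simp add: less_mult_imp_div_less)
    have "\<bar>z $ ((k div n)*n + k mod n)\<bar> \<le> (\<Sum>i<n. \<bar>z$((k div n)*n+i)\<bar>)"
      using assms(1) by (intro member_le_sum[where f="\<lambda>i. \<bar>z$((k div n)*n+i)\<bar>"]) auto
    then have "\<bar>z $ k\<bar> \<le> ?M" using blk_le_normT[OF kT, where n=n and z=z] kd by (metis order_trans)
    then show ?thesis using k(2) by linarith
  qed
  have N0: "(\<Sum>i<n. \<bar>z$i\<bar>) \<le> ?M" using blk_le_normT[where t=0 and T=T and n=n and z=z] assms(2) by simp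
  have SB: "(\<Sum>j<n. Bmat n \<beta> $$ (i,j) * z $ j) = \<beta> * z $ i" if i: "i < n" for i
  proof -
    have "(\<Sum>j<n. Bmat n \<beta> $$ (i,j) * z $ j) = (\<Sum>j<n. (if i = j then \<beta> * z $ j else 0) + (1-\<beta>)/real n * z $ j)"
      by (intro sum.cong) (auto simp: Bmat_def AIMD_entry i algebra_simps)
    also have "\<dots> = (\<Sum>j<n. (if i = j then \<beta> * z $ j else 0)) + (\<Sum>j<n. (1-\<beta>)/real n * z $ j)"
      by (rule sum.distrib)
    also have "(\<Sum>j<n. (1-\<beta>)/real n * z $ j) = (1-\<beta>)/real n * (\<Sum>j<n. z $ j)"
      by (rule sum_distrib_left[symmetric])
    also have "\<dots> = 0" using z0 by simp
    also have "(\<Sum>j<n. (if i = j then \<beta> * z $ j else 0)) = \<beta> * z $ i" using i by simp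
    finally show ?thesis by simp
  qed
  have gB: "(\<Sum>i<n. \<bar>\<Sum>j<n. Bmat n \<beta> $$ (i,j) * z$j\<bar>) \<le> \<beta> * (\<Sum>i<n. \<bar>z$i\<bar>)"
  proof -
    have "(\<Sum>i<n. \<bar>\<Sum>j<n. Bmat n \<beta> $$ (i,j) * z$j\<bar>) = (\<Sum>i<n. \<beta> * \<bar>z$i\<bar>)"
      using assms(3) by (intro sum.cong) (auto simp: SB abs_mult)
    then show ?thesis by (simp add: sum_distrib_left)
  qed
  show "normT n T (Emat n T \<beta> *\<^sub>v z) < ?M" unfolding Emat_def
  proof (rule normT_less[OF assms(2)])
    fix t assume t: "t < T"
    have bb: "norm1 (blk n (Dmat n T (Bmat n \<beta>) *\<^sub>v z) t) \<le>
     (if t = 0 then \<beta> * (\<Sum>i<n. \<bar>z$i\<bar>) else if t = 1 then (\<beta>+1)/2 * (\<Sum>i<n. \<bar>z$i\<bar>)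
      else (\<beta> * (\<Sum>i<n. \<bar>z$i\<bar>) + real t * (\<Sum>i<n. \<bar>z$((t-1)*n+i)\<bar>)) / real (t+1))"
      by (rule blk_bound[OF assms(1) zc t gB])
    have Nt: "(\<Sum>i<n. \<bar>z$((t-1)*n+i)\<bar>) \<le> ?M" using t by (intro blk_le_normT) simp
    have bM: "\<beta> * (\<Sum>i<n. \<bar>z$i\<bar>) \<le> \<beta> * ?M" using N0 assms(3) by simp
    have bM2: "\<beta> * ?M < ?M" using Mpos assms(4) by simp
    have c2: "(\<beta> * (\<Sum>i<n. \<bar>z$i\<bar>) + real t * (\<Sum>i<n. \<bar>z$((t-1)*n+i)\<bar>)) / real (t+1) < ?M"
    proof -
      have "\<beta> * (\<Sum>i<n. \<bar>z$i\<bar>) + real t * (\<Sum>i<n. \<bar>z$((t-1)*n+i)\<bar>) < ?M + real t * ?M"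
        using bM bM2 Nt by (intro add_less_le_mono mult_left_mono) auto
      then show ?thesis by (simp add: field_simps)
    qed
    have c1: "(\<beta>+1)/2 * (\<Sum>i<n. \<bar>z$i\<bar>) < ?M"
    proof -
      have "(\<beta>+1) * (\<Sum>i<n. \<bar>z$i\<bar>) < 2 * ?M" unfolding distrib_right using bM bM2 N0 by linarith
      then show ?thesis by simp
    qed
    show "norm1 (blk n (Dmat n T (Bmat n \<beta>) *\<^sub>v z) t) < ?M"
      using bb c1 c2 bM bM2 by (auto split: if_splits)
  qed
qed

end
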